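(* Let $\mu,\nu\in\mathcal{P}(\mathcal{X})$, $0<m_1\le m_2<\infty$, $K:\mathcal{X}\times\mathcal{X}\to(0,1]$ measurable with lower decay $l$, and let $(\alpha_1,\tilde\alpha_1)$, $(\alpha_2,\tilde\alpha_2)$ be pairs of tail functions (with $\mu(B_{m_1})>0$, $\nu(B_{m_1})>0$, $\alpha_1,\alpha_2>0$). Define \[ \tilde\beta_2(r)=\frac{1}{\nu(B_{m_1})}\sup_{a\ge r}\frac{\nu(B_a^{\mathsf c})}{\alpha_2(a)\wedge1}\ (r\ge m_1),\qquad \beta_2(r)=\frac{1}{\nu(B_{m_1})}\Big(\sup_{a\ge r}\frac{\nu(B_a^{\mathsf c})}{\tilde\alpha_2(a)}+\nu(B_r^{\mathsf c})\Big)\ (r\ge m_2). \] Let $r\ge m_2$ and assume $\tilde\alpha_1(m_2)\le0.5$, $\tilde\beta_2(m_1)\le0.5$ and $l(r)\le1$. Then for all $f\in\mathcal{F}^{\mu,norm}_{\alpha_1,\tilde\alpha_1}$ and $g\in\mathcal{G}^{\nu,norm}_{\alpha_2,\tilde\alpha_2}$, \[ \int L_{K^\top,\nu}(g)f\,d\mu\ge l(r)-\tilde\alpha_1(m_2)-4\tilde\beta_2(m_1)-4\alpha_1(r)-4\tilde\alpha_1(r)-5\beta_2(r)-5\tilde\beta_2(r). \]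
   Context: $\mathcal{X}$ is a Polish space with metric $d_{\mathcal{X}}$, $x_0$ fixed, $B_r=\{x:d_{\mathcal{X}}(x_0,x)\le r\}$, $B_r^{\mathsf c}=\mathcal{X}\setminus B_r$; $a\wedge b=\min\{a,b\}$. A non-increasing $l:[0,\infty)\to[0,\infty)$ is a lower decay of $K$ if $\inf_{x,y\in B_r}K(x,y)\ge l(r)$ for all $r>0$. $L_{K^\top,\nu}g(x)=\int K(y,x)g(y)\,\nu(dy)$. A tail function is a non-increasing $\alpha:(0,\infty)\to[0,\infty)$ with $\lim_{r\to\infty}\alpha(r)=0$. For $\rho\in\mathcal{P}(\mathcal{X})$: $\mathcal{F}^{\rho}_{\alpha,\tilde\alpha}$ is the set of $f\in L^2(\rho)$ with $f\mathbf 1_{B_{m_2}}\ge0$ $\rho$-a.s., $\int_{B_r^{\mathsf c}}f_+\,d\rho\le\alpha(r)\int f\,d\rho$ for all $r\ge m_1$, $\int_{B_r^{\mathsf c}}f_-\,d\rho\le\tilde\alpha(r)\int f\,d\rho$ for all $r\ge m_2$; $\mathcal{G}^{\rho}_{\alpha,\tilde\alpha}=\{g\in L^2(\rho):\int fg\,d\rho\ge0\ \forall f\in\mathcal{F}^{\rho}_{\alpha,\tilde\alpha}\}$; superscript $norm$ denotes elements with $\int\cdot\,d\rho=1$. *)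

theory Defs
  imports "HOL-Analysis.Analysis" "HOL-Probability.Probability"
begin

definition lower_decay :: "('a::metric_space) \<Rightarrow> ('a \<Rightarrow> 'a \<Rightarrow> real) \<Rightarrow> (real \<Rightarrow> real) \<Rightarrow> bool" where
  "lower_decay x0 K l \<longleftrightarrow>
     antimono_on {0..} l \<and> (\<forall>r\<ge>0. l r \<ge> 0) \<and>
     (\<forall>r>0. \<forall>x\<in>cball x0 r. \<forall>y\<in>cball x0 r. l r \<le> K x y)"

definition tail_function :: "(real \<Rightarrow> real) \<Rightarrow> bool" where
  "tail_function \<alpha> \<longleftrightarrow>
     antimono_on {0<..} \<alpha> \<and> (\<forall>r>0. \<alpha> r \<ge> 0) \<and> (\<alpha> \<longlongrightarrow> 0) at_top"

definition L2 :: "'a measure \<Rightarrow> ('a \<Rightarrow> real) set" where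
  "L2 \<rho> = {f. f \<in> borel_measurable \<rho> \<and> integrable \<rho> (\<lambda>x. (f x)\<^sup>2)}"

definition Lop :: "('a \<Rightarrow> 'a \<Rightarrow> real) \<Rightarrow> 'a measure \<Rightarrow> ('a \<Rightarrow> real) \<Rightarrow> 'a \<Rightarrow> real" where
  "Lop K \<nu> g x = (\<integral>y. K y x * g y \<partial>\<nu>)"

definition Fcls :: "('a::metric_space) \<Rightarrow> real \<Rightarrow> real \<Rightarrow> 'a measure \<Rightarrow> (real \<Rightarrow> real) \<Rightarrow> (real \<Rightarrow> real) \<Rightarrow> ('a \<Rightarrow> real) set" where
  "Fcls x0 m1 m2 \<rho> \<alpha> \<alpha>' = {f \<in> L2 \<rho>.
     (AE x in \<rho>. x \<in> cball x0 m2 \<longrightarrow> f x \<ge> 0) \<and>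
     (\<forall>r\<ge>m1. (\<integral>x\<in>space \<rho> - cball x0 r. max (f x) 0 \<partial>\<rho>) \<le> \<alpha> r * (\<integral>x. f x \<partial>\<rho>)) \<and>
     (\<forall>r\<ge>m2. (\<integral>x\<in>space \<rho> - cball x0 r. max (- f x) 0 \<partial>\<rho>) \<le> \<alpha>' r * (\<integral>x. f x \<partial>\<rho>))}"

definition Gcls :: "('a::metric_space) \<Rightarrow> real \<Rightarrow> real \<Rightarrow> 'a measure \<Rightarrow> (real \<Rightarrow> real) \<Rightarrow> (real \<Rightarrow> real) \<Rightarrow> ('a \<Rightarrow> real) set" where
  "Gcls x0 m1 m2 \<rho> \<alpha> \<alpha>' = {g \<in> L2 \<rho>. \<forall>f \<in> Fcls x0 m1 m2 \<rho> \<alpha> \<alpha>'. (\<integral>x. f x * g x \<partial>\<rho>) \<ge> 0}"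

definition Fnorm where
  "Fnorm x0 m1 m2 \<rho> \<alpha> \<alpha>' = {f \<in> Fcls x0 m1 m2 \<rho> \<alpha> \<alpha>'. (\<integral>x. f x \<partial>\<rho>) = 1}"

definition Gnorm where
  "Gnorm x0 m1 m2 \<rho> \<alpha> \<alpha>' = {g \<in> Gcls x0 m1 m2 \<rho> \<alpha> \<alpha>'. (\<integral>x. g x \<partial>\<rho>) = 1}"

text \<open>beta tilde and beta, valued in extended reals (the suprema may be infinite;
  division by 0 of a positive number gives infinity).\<close>

definition beta_tilde :: "('a::metric_space) \<Rightarrow> real \<Rightarrow> 'a measure \<Rightarrow> (real \<Rightarrow> real) \<Rightarrow> real \<Rightarrow> ereal" where
  "beta_tilde x0 m1 \<nu> \<alpha> r =
     (SUP a\<in>{r..}. ereal (measure \<nu> (space \<nu> - cball x0 a)) / ereal (min (\<alpha> a) 1))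
       / ereal (measure \<nu> (cball x0 m1))"

definition beta :: "('a::metric_space) \<Rightarrow> real \<Rightarrow> 'a measure \<Rightarrow> (real \<Rightarrow> real) \<Rightarrow> real \<Rightarrow> ereal" where
  "beta x0 m1 \<nu> \<alpha>' r =
     ((SUP a\<in>{r..}. ereal (measure \<nu> (space \<nu> - cball x0 a)) / ereal (\<alpha>' a))
        + ereal (measure \<nu> (space \<nu> - cball x0 r)))
       / ereal (measure \<nu> (cball x0 m1))"

end

theory Submission imports Defs begin
lemma meas_cong: "sets M = sets borel \<Longrightarrow> (h::'a::topological_space \<Rightarrow> real) \<in> borel_measurable borel \<Longrightarrow> h \<in> borel_measurable M"
  using measurable_cong_sets by blast

lemma bint: "prob_space M \<Longrightarrow> (h::'a \<Rightarrow> real) \<in> borel_measurable M \<Longrightarrow> (\<And>x. \<bar>h x\<bar> \<le> B) \<Longrightarrow> integrable M h"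
  by (rule finite_measure.integrable_const_bound[where B=B]) (auto simp: prob_space.finite_measure)

lemma L2_int: "prob_space M \<Longrightarrow> g \<in> L2 M \<Longrightarrow> integrable M g"
  unfolding L2_def by (auto intro: finite_measure.square_integrable_imp_integrable prob_space.finite_measure)

lemma ereal_inf_nonneg: "0 \<le> (x::real) \<Longrightarrow> 0 \<le> ereal x * \<infinity>"
  by (cases "x = 0") (auto simp: ereal_mult_infty)

lemma pospart:
  fixes x0 :: "'a::polish_space" and \<nu> :: "'a measure" and g :: "'a \<Rightarrow> real"
  assumes P: "prob_space \<nu>" and sb: "sets \<nu> = sets borel" and "0 < m1" "m1 \<le> m2" "m2 \<le> r"
    and ta: "tail_function \<alpha>2'" and a2: "\<forall>s>0. \<alpha>2 s > 0" and v0: "measure \<nu> (cball x0 m1) > 0"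
    and bc: "beta x0 m1 \<nu> \<alpha>2' r = ereal c" and gG: "g \<in> Gcls x0 m1 m2 \<nu> \<alpha>2 \<alpha>2'"
  shows "0 \<le> c \<and> (\<integral>y. indicator (- cball x0 r) y * max (g y) 0 \<partial>\<nu>) \<le> c * (\<integral>y. indicator (cball x0 m1) y * g y \<partial>\<nu>)"
proof -
  interpret N: prob_space \<nu> by fact
  have sp: "space \<nu> = UNIV" using sets_eq_imp_space_eq[OF sb] by simp
  have gL2: "g \<in> L2 \<nu>" and gpos: "\<And>h. h \<in> Fcls x0 m1 m2 \<nu> \<alpha>2 \<alpha>2' \<Longrightarrow> 0 \<le> (\<integral>x. h x * g x \<partial>\<nu>)"
    using gG unfolding Gcls_def by auto
  have gm[measurable]: "g \<in> borel_measurable borel" using gL2 sb measurable_cong_sets unfolding L2_def by blast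
  have cb[measurable]: "cball x0 s \<in> sets borel" for s by (simp add: borel_closed)
  have gi: "integrable \<nu> g" using L2_int[OF P gL2] .
  have a2'0: "0 \<le> \<alpha>2' a" if "a > 0" for a using ta that unfolding tail_function_def by auto
  have a2'mono: "\<alpha>2' b \<le> \<alpha>2' a" if "0 < a" "a \<le> b" for a b
  proof -
    have "antimono_on {0<..} \<alpha>2'" using ta unfolding tail_function_def by simp
    then show ?thesis by (rule monotone_onD) (use that in auto)
  qed
  have r0: "r > 0" using assms by simp
  define v where "v = measure \<nu> (cball x0 m1)"
  have v0': "v > 0" using v0 v_def by simp
  define w where "w = measure \<nu> (space \<nu> - cball x0 r)"
  have w0: "0 \<le> w" unfolding w_def by simp
  define Sp where "Sp = (SUP a\<in>{r..}. ereal (measure \<nu> (space \<nu> - cball x0 a)) / ereal (\<alpha>2' a))"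
  have btd: "beta x0 m1 \<nu> \<alpha>2' r = (Sp + ereal w) / ereal v" unfolding beta_def Sp_def v_def w_def by simp
  have elem: "ereal (measure \<nu> (space \<nu> - cball x0 a)) / ereal (\<alpha>2' a) \<le> Sp" if "a \<ge> r" for a
    unfolding Sp_def using that by (intro SUP_upper) auto
  have elem0: "0 \<le> ereal (measure \<nu> (space \<nu> - cball x0 a)) / ereal (\<alpha>2' a)" if "a \<ge> r" for a
  proof -
    have m0: "0 \<le> measure \<nu> (space \<nu> - cball x0 a)" by simp
    have "0 \<le> \<alpha>2' a" using a2'0[of a] that r0 by simp
    then show ?thesis using ereal_inf_nonneg[OF m0] by (cases "\<alpha>2' a = 0") simp_all
  qed
  have Sp0: "0 \<le> Sp"
    using elem[of r] elem0[of r] by (auto intro: order.trans)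
  have "Sp \<noteq> \<infinity>"
  proof
    assume "Sp = \<infinity>"
    then have "beta x0 m1 \<nu> \<alpha>2' r = \<infinity>" using btd v0' by simp
    then show False using bc by simp
  qed
  then obtain s where s: "Sp = ereal s" using Sp0 by (cases Sp) auto
  have s0: "0 \<le> s" using Sp0 s by simp
  have ce: "c = (s + w) / v" using bc btd s v0' by simp
  have c0: "0 \<le> c" using ce s0 w0 v0' by simp
  have cv: "c * v = s + w" using ce v0' by simp
  have key: "measure \<nu> (space \<nu> - cball x0 a) \<le> \<alpha>2' a * s" if "a \<ge> r" for a
  proof (cases "\<alpha>2' a = 0")
    case True
    then have "ereal (measure \<nu> (space \<nu> - cball x0 a)) * \<infinity> \<le> ereal s" using elem[OF that] s by simp
    note le = this
    have m0: "0 \<le> measure \<nu> (space \<nu> - cball x0 a)" by simp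
    have "\<not> measure \<nu> (space \<nu> - cball x0 a) > 0"
    proof
      assume p: "measure \<nu> (space \<nu> - cball x0 a) > 0"
      then have "ereal (measure \<nu> (space \<nu> - cball x0 a)) * \<infinity> = \<infinity>" by simp
      with le show False by simp
    qed
    then have "measure \<nu> (space \<nu> - cball x0 a) = 0" using m0 by linarith
    then show ?thesis using True by simp
  next
    case False
    then have pos: "\<alpha>2' a > 0" using a2'0[of a] that r0 by simp
    have "measure \<nu> (space \<nu> - cball x0 a) / \<alpha>2' a \<le> s" using elem[OF that] s False by simp
    then show ?thesis using pos by (simp add: divide_le_eq mult.commute)
  qed
  define S where "S = {y. g y > 0} - cball x0 r"
  have Sm[measurable]: "S \<in> sets borel" unfolding S_def by measurable
  define h where "h y = c * indicator (cball x0 m1) y - indicator S y" for y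
  have hm[measurable]: "h \<in> borel_measurable borel" unfolding h_def by measurable
  have hb: "\<bar>h y\<bar> \<le> c + 1" for y
    unfolding h_def using c0 by (auto split: split_indicator)
  have Wm: "UNIV - cball x0 r \<in> sets \<nu>" using sets.Diff[OF sets.top cb[of r]] sb by simp
  have mS: "measure \<nu> S \<le> w" unfolding w_def S_def sp using Wm by (intro N.finite_measure_mono) auto
  have hint: "(\<integral>y. h y \<partial>\<nu>) = c * v - measure \<nu> S"
  proof -
    have i1: "integrable \<nu> (\<lambda>y. c * indicator (cball x0 m1) y :: real)"
      by (rule bint[OF P, where B="c"]) (auto intro!: meas_cong[OF sb] simp: c0 split: split_indicator)
    have i2: "integrable \<nu> (indicator S :: _ \<Rightarrow> real)"
      by (rule bint[OF P, where B=1]) (auto intro!: meas_cong[OF sb] split: split_indicator)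
    have "(\<integral>y. h y \<partial>\<nu>) = (\<integral>y. c * indicator (cball x0 m1) y \<partial>\<nu>) - (\<integral>y. indicator S y \<partial>\<nu>)"
      unfolding h_def using Bochner_Integration.integral_diff[OF i1 i2] by simp
    then show ?thesis using sp v_def by simp
  qed
  have hs: "s \<le> (\<integral>y. h y \<partial>\<nu>)" using hint cv mS by simp
  have hFc: "h \<in> Fcls x0 m1 m2 \<nu> \<alpha>2 \<alpha>2'"
    unfolding Fcls_def L2_def
  proof (intro CollectI conjI allI impI)
    show "h \<in> borel_measurable \<nu>" by (rule meas_cong[OF sb]) measurable
    show "integrable \<nu> (\<lambda>x. (h x)\<^sup>2)"
    proof (rule bint[OF P, where B="(c+1)^2"])
      show "(\<lambda>x. (h x)\<^sup>2) \<in> borel_measurable \<nu>" by (rule meas_cong[OF sb]) measurable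
      fix x show "\<bar>(h x)\<^sup>2\<bar> \<le> (c + 1)\<^sup>2" using hb[of x]
        by (metis abs_ge_zero abs_power2 power2_abs power_mono)
    qed
    show "AE x in \<nu>. x \<in> cball x0 m2 \<longrightarrow> 0 \<le> h x"
      using c0 \<open>m2 \<le> r\<close> unfolding h_def S_def by (auto split: split_indicator)
  next
    fix a assume a: "m1 \<le> a"
    have "(\<integral>x\<in>space \<nu> - cball x0 a. max (h x) 0 \<partial>\<nu>) = 0"
      unfolding set_lebesgue_integral_def
    proof (rule integral_eq_zero_AE, rule AE_I2)
      fix x
      show "indicator (space \<nu> - cball x0 a) x *\<^sub>R max (h x) 0 = 0"
        using a \<open>m2 \<le> r\<close> \<open>m1 \<le> m2\<close> unfolding h_def S_def by (auto split: split_indicator)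
    qed
    moreover have "0 \<le> \<alpha>2 a * (\<integral>y. h y \<partial>\<nu>)"
      using a2[rule_format, of a] a \<open>0<m1\<close> hs s0 by simp
    ultimately show "(\<integral>x\<in>space \<nu> - cball x0 a. max (h x) 0 \<partial>\<nu>) \<le> \<alpha>2 a * (\<integral>y. h y \<partial>\<nu>)" by simp
  next
    fix a assume a: "m2 \<le> a"
    have "(\<integral>x\<in>space \<nu> - cball x0 a. max (- h x) 0 \<partial>\<nu>) \<le> (\<integral>x. indicator (space \<nu> - cball x0 (max a r)) x \<partial>\<nu>)"
      unfolding set_lebesgue_integral_def
    proof (rule integral_mono')
      show "integrable \<nu> (indicator (space \<nu> - cball x0 (max a r)) :: _ \<Rightarrow> real)"
        by (rule bint[OF P, where B=1]) (auto simp: sp intro!: meas_cong[OF sb] split: split_indicator)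
      fix x
      show "indicator (space \<nu> - cball x0 a) x *\<^sub>R max (- h x) 0 \<le> indicator (space \<nu> - cball x0 (max a r)) x"
        using a c0 \<open>m2 \<le> r\<close> \<open>m1 \<le> m2\<close> unfolding h_def S_def by (auto split: split_indicator)
    qed (auto split: split_indicator)
    also have "\<dots> = measure \<nu> (space \<nu> - cball x0 (max a r))" by (simp add: sp)
    also have "\<dots> \<le> \<alpha>2' (max a r) * s" using key by simp
    also have "\<dots> \<le> \<alpha>2' a * s"
      using a2'mono[of a "max a r"] a \<open>0<m1\<close> \<open>m1 \<le> m2\<close> s0 by (intro mult_right_mono) auto
    also have "\<dots> \<le> \<alpha>2' a * (\<integral>y. h y \<partial>\<nu>)"
      using a2'0[of a] a \<open>0<m1\<close> \<open>m1 \<le> m2\<close> hs by (intro mult_left_mono) auto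
    finally show "(\<integral>x\<in>space \<nu> - cball x0 a. max (- h x) 0 \<partial>\<nu>) \<le> \<alpha>2' a * (\<integral>y. h y \<partial>\<nu>)" .
  qed
  have "0 \<le> (\<integral>x. h x * g x \<partial>\<nu>)" using gpos[OF hFc] .
  also have "(\<integral>x. h x * g x \<partial>\<nu>) = c * (\<integral>y. indicator (cball x0 m1) y * g y \<partial>\<nu>) - (\<integral>y. indicator (- cball x0 r) y * max (g y) 0 \<partial>\<nu>)"
  proof -
    have "(\<lambda>x. h x * g x) = (\<lambda>x. c * (indicator (cball x0 m1) x * g x) - indicator (- cball x0 r) x * max (g x) 0)"
      unfolding h_def S_def by (auto simp: fun_eq_iff algebra_simps split: split_indicator)
    moreover have "integrable \<nu> (\<lambda>x. indicator (cball x0 m1) x * g x)"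
      using integrable_mult_indicator[of "cball x0 m1" \<nu> g] gi sb by simp
    moreover have "integrable \<nu> (\<lambda>x. indicator (- cball x0 r) x * max (g x) 0)"
      using integrable_mult_indicator[of "- cball x0 r" \<nu> "\<lambda>x. max (g x) 0"] gi sb by auto
    ultimately show ?thesis by simp
  qed
  finally show ?thesis using c0 by auto
qed
lemma negpart:
  fixes x0 :: "'a::polish_space" and \<nu> :: "'a measure" and g :: "'a \<Rightarrow> real"
  assumes P: "prob_space \<nu>" and sb: "sets \<nu> = sets borel" and "0 < m1" "m1 \<le> m2"
    and ta: "tail_function \<alpha>2'" and a2: "\<forall>s>0. \<alpha>2 s > 0" and v0: "measure \<nu> (cball x0 m1) > 0"
    and bt: "beta_tilde x0 m1 \<nu> \<alpha>2 m1 \<le> 0.5" and gG: "g \<in> Gcls x0 m1 m2 \<nu> \<alpha>2 \<alpha>2'"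
  shows "\<exists>b'. beta_tilde x0 m1 \<nu> \<alpha>2 m1 = ereal b' \<and> 0 \<le> b' \<and> b' \<le> 1/2 \<and>
     (\<integral>y. max (- g y) 0 \<partial>\<nu>) \<le> b' * (\<integral>y. indicator (cball x0 m1) y * g y \<partial>\<nu>)"
proof -
  interpret N: prob_space \<nu> by fact
  have sp: "space \<nu> = UNIV" using sets_eq_imp_space_eq[OF sb] by simp
  have gL2: "g \<in> L2 \<nu>" and gpos: "\<And>h. h \<in> Fcls x0 m1 m2 \<nu> \<alpha>2 \<alpha>2' \<Longrightarrow> 0 \<le> (\<integral>x. h x * g x \<partial>\<nu>)"
    using gG unfolding Gcls_def by auto
  have gm[measurable]: "g \<in> borel_measurable borel" using gL2 sb measurable_cong_sets unfolding L2_def by blast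
  have cb[measurable]: "cball x0 s \<in> sets borel" for s by (simp add: borel_closed)
  have gi: "integrable \<nu> g" using L2_int[OF P gL2] .
  define v where "v = measure \<nu> (cball x0 m1)"
  have v0': "v > 0" using v0 v_def by simp
  define Sp where "Sp = (SUP a\<in>{m1..}. ereal (measure \<nu> (space \<nu> - cball x0 a)) / ereal (min (\<alpha>2 a) 1))"
  have btd: "beta_tilde x0 m1 \<nu> \<alpha>2 m1 = Sp / ereal v" unfolding beta_tilde_def Sp_def v_def by simp
  have mpos: "min (\<alpha>2 a) 1 > 0" if "a \<ge> m1" for a using a2 that \<open>0 < m1\<close> by auto
  have elem: "ereal (measure \<nu> (space \<nu> - cball x0 a)) / ereal (min (\<alpha>2 a) 1) \<le> Sp" if "a \<ge> m1" for a
    unfolding Sp_def using that by (intro SUP_upper) auto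
  have Sp0: "0 \<le> Sp"
    using elem[of m1] mpos[of m1] by (auto intro: order.trans[rotated])
  have "Sp \<noteq> \<infinity>"
  proof
    assume "Sp = \<infinity>"
    then have "beta_tilde x0 m1 \<nu> \<alpha>2 m1 = \<infinity>" using btd v0' by simp
    then show False using bt by simp
  qed
  then obtain s where s: "Sp = ereal s" using Sp0 by (cases Sp) auto
  have s0: "0 \<le> s" using Sp0 s by simp
  define b' where "b' = s / v"
  have bte: "beta_tilde x0 m1 \<nu> \<alpha>2 m1 = ereal b'" using btd s v0' b'_def by simp
  have b'h: "b' \<le> 1/2" using bt bte by simp
  have b'0: "0 \<le> b'" using s0 v0' b'_def by simp
  have b'v: "b' * v = s" using v0' b'_def by simp
  have key: "measure \<nu> (space \<nu> - cball x0 a) \<le> \<alpha>2 a * (b' * v)" if "a \<ge> m1" for a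
  proof -
    have "measure \<nu> (space \<nu> - cball x0 a) / min (\<alpha>2 a) 1 \<le> s"
      using elem[OF that] mpos[OF that] s by (simp del: ereal_min)
    then have "measure \<nu> (space \<nu> - cball x0 a) \<le> min (\<alpha>2 a) 1 * s"
      using mpos[OF that] by (simp add: divide_le_eq mult.commute)
    also have "\<dots> \<le> \<alpha>2 a * s" using s0 by (intro mult_right_mono) auto
    finally show ?thesis using b'v by simp
  qed
  define S where "S = {y. g y < 0}"
  have Sm[measurable]: "S \<in> sets borel" unfolding S_def by measurable
  define h where "h y = b' * indicator (cball x0 m1) y + indicator S y" for y
  have hm[measurable]: "h \<in> borel_measurable borel" unfolding h_def by measurable
  have h0: "0 \<le> h y" and h1: "h y \<le> b' + 1" for y
    unfolding h_def using b'0 by (auto split: split_indicator)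
  have hint: "(\<integral>y. h y \<partial>\<nu>) = b' * v + measure \<nu> S"
  proof -
    have i1: "integrable \<nu> (\<lambda>y. b' * indicator (cball x0 m1) y :: real)"
      by (rule bint[OF P, where B="b'"]) (auto intro!: meas_cong[OF sb] simp: b'0 split: split_indicator)
    have i2: "integrable \<nu> (indicator S :: _ \<Rightarrow> real)"
      by (rule bint[OF P, where B=1]) (auto intro!: meas_cong[OF sb] split: split_indicator)
    have "(\<integral>y. h y \<partial>\<nu>) = (\<integral>y. b' * indicator (cball x0 m1) y \<partial>\<nu>) + (\<integral>y. indicator S y \<partial>\<nu>)"
      unfolding h_def using Bochner_Integration.integral_add[OF i1 i2] by simp
    then show ?thesis using sp v_def by simp
  qed
  have hFc: "h \<in> Fcls x0 m1 m2 \<nu> \<alpha>2 \<alpha>2'"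
    unfolding Fcls_def L2_def
  proof (intro CollectI conjI allI impI)
    show "h \<in> borel_measurable \<nu>" by (rule meas_cong[OF sb]) measurable
    show "integrable \<nu> (\<lambda>x. (h x)\<^sup>2)"
    proof (rule bint[OF P, where B="(b'+1)^2"])
      show "(\<lambda>x. (h x)\<^sup>2) \<in> borel_measurable \<nu>" by (rule meas_cong[OF sb]) measurable
      fix x show "\<bar>(h x)\<^sup>2\<bar> \<le> (b' + 1)\<^sup>2" using h0[of x] h1[of x] by (simp add: power_mono)
    qed
    show "AE x in \<nu>. x \<in> cball x0 m2 \<longrightarrow> 0 \<le> h x" using h0 by simp
  next
    fix a assume a: "m1 \<le> a"
    have "(\<integral>x\<in>space \<nu> - cball x0 a. max (h x) 0 \<partial>\<nu>) \<le> (\<integral>x. indicator (space \<nu> - cball x0 a) x \<partial>\<nu>)"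
      unfolding set_lebesgue_integral_def
    proof (rule integral_mono')
      show "integrable \<nu> (indicator (space \<nu> - cball x0 a) :: _ \<Rightarrow> real)"
        by (rule bint[OF P, where B=1]) (auto simp: sp intro!: meas_cong[OF sb] split: split_indicator)
      fix x
      show "indicator (space \<nu> - cball x0 a) x *\<^sub>R max (h x) 0 \<le> indicator (space \<nu> - cball x0 a) x"
        using a \<open>0<m1\<close> unfolding h_def by (auto split: split_indicator simp: dist_commute)
    qed (auto split: split_indicator)
    also have "\<dots> = measure \<nu> (space \<nu> - cball x0 a)" by (simp add: sp)
    also have "\<dots> \<le> \<alpha>2 a * (b' * v)" using key[OF a] .
    also have "\<dots> \<le> \<alpha>2 a * (\<integral>y. h y \<partial>\<nu>)"
      using a2[rule_format, of a] a \<open>0<m1\<close> hint by (intro mult_left_mono) auto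
    finally show "(\<integral>x\<in>space \<nu> - cball x0 a. max (h x) 0 \<partial>\<nu>) \<le> \<alpha>2 a * (\<integral>y. h y \<partial>\<nu>)" .
  next
    fix a assume a: "m2 \<le> a"
    have "(\<integral>x\<in>space \<nu> - cball x0 a. max (- h x) 0 \<partial>\<nu>) = 0"
      using h0 unfolding set_lebesgue_integral_def by (simp add: max_def)
    moreover have "0 \<le> \<alpha>2' a" using ta a \<open>0<m1\<close> \<open>m1 \<le> m2\<close> unfolding tail_function_def by auto
    moreover have "0 \<le> (\<integral>y. h y \<partial>\<nu>)" using h0 by simp
    ultimately show "(\<integral>x\<in>space \<nu> - cball x0 a. max (- h x) 0 \<partial>\<nu>) \<le> \<alpha>2' a * (\<integral>y. h y \<partial>\<nu>)" by simp
  qed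
  have "0 \<le> (\<integral>x. h x * g x \<partial>\<nu>)" using gpos[OF hFc] .
  also have "(\<integral>x. h x * g x \<partial>\<nu>) = b' * (\<integral>y. indicator (cball x0 m1) y * g y \<partial>\<nu>) - (\<integral>y. max (- g y) 0 \<partial>\<nu>)"
  proof -
    have "(\<lambda>x. h x * g x) = (\<lambda>x. b' * (indicator (cball x0 m1) x * g x) - max (- g x) 0)"
      unfolding h_def S_def by (auto simp: fun_eq_iff algebra_simps split: split_indicator)
    moreover have "integrable \<nu> (\<lambda>x. indicator (cball x0 m1) x * g x)"
      using integrable_mult_indicator[of "cball x0 m1" \<nu> g] gi sb by simp
    moreover have "integrable \<nu> (\<lambda>x. max (- g x) 0)" using gi by auto
    ultimately show ?thesis by simp
  qed
  finally show ?thesis using bte b'0 b'h by auto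
qed
lemma Lbounds:
  fixes x0 :: "'a::polish_space" and \<nu> :: "'a measure" and g :: "'a \<Rightarrow> real"
  assumes P: "prob_space \<nu>" and sb: "sets \<nu> = sets borel"
    and Km: "(\<lambda>(x, y). K x y) \<in> borel_measurable (borel \<Otimes>\<^sub>M borel)"
    and Kb: "\<forall>x y. 0 < K x y \<and> K x y \<le> 1"
    and gi: "integrable \<nu> g" and gm: "g \<in> borel_measurable borel"
    and lK: "\<forall>x\<in>cball x0 r. \<forall>y\<in>cball x0 r. lr \<le> K x y" and g1: "(\<integral>y. g y \<partial>\<nu>) = 1"
  shows "lr * indicator (cball x0 r) x * (\<integral>y. indicator (cball x0 r) y * max (g y) 0 \<partial>\<nu>) - (\<integral>y. max (- g y) 0 \<partial>\<nu>) \<le> Lop K \<nu> g x"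
    and "Lop K \<nu> g x \<le> 1 + (\<integral>y. max (- g y) 0 \<partial>\<nu>)"
proof -
  have cb[measurable]: "cball x0 s \<in> sets borel" for s by (simp add: borel_closed)
  have "(\<lambda>y. (y, x)) \<in> borel \<rightarrow>\<^sub>M borel \<Otimes>\<^sub>M borel" by measurable
  from measurable_compose[OF this Km] have Kx: "(\<lambda>y. K y x) \<in> borel_measurable borel" by simp
  have Kxi: "integrable \<nu> (\<lambda>y. K y x * g y)"
  proof (rule Bochner_Integration.integrable_bound[OF gi])
    show "(\<lambda>y. K y x * g y) \<in> borel_measurable \<nu>" using Kx gm by (intro meas_cong[OF sb] borel_measurable_times)
    show "AE y in \<nu>. norm (K y x * g y) \<le> norm (g y)"
    proof (intro AE_I2)
      fix y
      have "0 < K y x" "K y x \<le> 1" using Kb by auto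
      then show "norm (K y x * g y) \<le> norm (g y)" by (simp add: abs_mult mult_left_le_one_le)
    qed
  qed
  have gpi: "integrable \<nu> (\<lambda>y. max (g y) 0)" and gni: "integrable \<nu> (\<lambda>y. max (- g y) 0)" using gi by auto
  have gpci: "integrable \<nu> (\<lambda>y. indicator (cball x0 r) y * max (g y) 0)"
    using integrable_mult_indicator[of "cball x0 r" \<nu> "\<lambda>y. max (g y) 0"] gpi sb by simp
  have "(\<integral>y. lr * indicator (cball x0 r) x * (indicator (cball x0 r) y * max (g y) 0) - max (- g y) 0 \<partial>\<nu>)
      = lr * indicator (cball x0 r) x * (\<integral>y. indicator (cball x0 r) y * max (g y) 0 \<partial>\<nu>) - (\<integral>y. max (- g y) 0 \<partial>\<nu>)"
    using gpci gni by simp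
  moreover have "(\<integral>y. lr * indicator (cball x0 r) x * (indicator (cball x0 r) y * max (g y) 0) - max (- g y) 0 \<partial>\<nu>) \<le> Lop K \<nu> g x"
    unfolding Lop_def
  proof (rule integral_mono[OF _ Kxi])
    show "integrable \<nu> (\<lambda>y. lr * indicator (cball x0 r) x * (indicator (cball x0 r) y * max (g y) 0) - max (- g y) 0)"
      using gpci gni by simp
    fix y
    show "lr * indicator (cball x0 r) x * (indicator (cball x0 r) y * max (g y) 0) - max (- g y) 0 \<le> K y x * g y"
    proof (cases "g y \<ge> 0")
      case True
      have "lr * indicator (cball x0 r) x * (indicator (cball x0 r) y * g y) \<le> K y x * g y"
      proof -
        have "0 < K y x" using Kb by auto
        then show ?thesis using lK True by (auto split: split_indicator intro!: mult_right_mono)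
      qed
      then show ?thesis using True by simp
    next
      case False
      have "g y \<le> K y x * g y" using Kb False by (simp add: mult_le_cancel_right1)
      then show ?thesis using False by simp
    qed
  qed
  ultimately show "lr * indicator (cball x0 r) x * (\<integral>y. indicator (cball x0 r) y * max (g y) 0 \<partial>\<nu>) - (\<integral>y. max (- g y) 0 \<partial>\<nu>) \<le> Lop K \<nu> g x" by simp
  have "Lop K \<nu> g x \<le> (\<integral>y. g y + max (- g y) 0 \<partial>\<nu>)"
    unfolding Lop_def
  proof (rule integral_mono[OF Kxi])
    show "integrable \<nu> (\<lambda>y. g y + max (- g y) 0)" using gi gni by simp
    fix y show "K y x * g y \<le> g y + max (- g y) 0"
      using Kb[rule_format, of y x] by (cases "g y \<ge> 0") (auto simp: mult_le_cancel_right2 mult_nonneg_nonpos)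
  qed
  also have "\<dots> = 1 + (\<integral>y. max (- g y) 0 \<partial>\<nu>)" using gi gni g1 by simp
  finally show "Lop K \<nu> g x \<le> 1 + (\<integral>y. max (- g y) 0 \<partial>\<nu>)" .
qed

lemma real_main:
  fixes lr Pg Pf a t :: real
  assumes "0 \<le> lr" "lr \<le> 1" "0 \<le> Pg" "0 \<le> Pf" "1 - a \<le> Pf" "1 - t \<le> Pg" "0 \<le> a" "0 \<le> t"
  shows "lr - a - t \<le> lr * Pg * Pf"
proof (cases "a \<le> 1 \<and> t \<le> 1")
  case True
  have "lr * (1 - t) * (1 - a) \<le> lr * Pg * Pf"
  proof (rule mult_mono)
    show "lr * (1 - t) \<le> lr * Pg" using assms by (intro mult_left_mono) auto
  qed (use assms True in auto)
  moreover have "lr - a - t \<le> lr * (1 - t) * (1 - a)"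
  proof -
    have "lr * (1 - t) * (1 - a) = lr - lr * t - lr * a + lr * t * a" by (simp add: algebra_simps)
    moreover have "lr * t \<le> t" "lr * a \<le> a" using assms by (auto intro: mult_left_le_one_le)
    moreover have "0 \<le> lr * t * a" using assms by simp
    ultimately show ?thesis by linarith
  qed
  ultimately show ?thesis by linarith
next
  case False
  then have "lr - a - t \<le> 0" using assms by auto
  also have "0 \<le> lr * Pg * Pf" using assms by simp
  finally show ?thesis .
qed

lemma ediv_nonneg: "0 \<le> (x::ereal) \<Longrightarrow> 0 < v \<Longrightarrow> 0 \<le> x / ereal v"
  by (cases x) auto

lemma beta_nonneg:
  assumes "0 < r" "measure \<nu> (cball x0 m1) > 0" "\<forall>s>0. 0 \<le> \<alpha> s"
  shows "0 \<le> beta x0 m1 \<nu> \<alpha> r"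
proof -
  have m0: "0 \<le> measure \<nu> (space \<nu> - cball x0 r)" by simp
  have "0 \<le> ereal (measure \<nu> (space \<nu> - cball x0 r)) / ereal (\<alpha> r)"
  proof -
    have "0 \<le> \<alpha> r" using assms by simp
    then show ?thesis using ereal_inf_nonneg[OF m0] by (cases "\<alpha> r = 0") simp_all
  qed
  also have "\<dots> \<le> (SUP a\<in>{r..}. ereal (measure \<nu> (space \<nu> - cball x0 a)) / ereal (\<alpha> a))"
    by (intro SUP_upper) auto
  finally have "0 \<le> (SUP a\<in>{r..}. ereal (measure \<nu> (space \<nu> - cball x0 a)) / ereal (\<alpha> a)) + ereal (measure \<nu> (space \<nu> - cball x0 r))"
    by simp
  then show ?thesis unfolding beta_def using assms by (intro ediv_nonneg) auto
qed

lemma beta_tilde_nonneg: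
  assumes "0 < r" "measure \<nu> (cball x0 m1) > 0" "\<forall>s>0. 0 < \<alpha> s"
  shows "0 \<le> beta_tilde x0 m1 \<nu> \<alpha> r"
proof -
  have "0 \<le> ereal (measure \<nu> (space \<nu> - cball x0 r)) / ereal (min (\<alpha> r) 1)"
  proof -
    have p: "0 < min (\<alpha> r) 1" using assms by simp
    have "0 \<le> measure \<nu> (space \<nu> - cball x0 r) / min (\<alpha> r) 1" using p by simp
    moreover have ne: "min (\<alpha> r) 1 \<noteq> 0" using p by linarith
    ultimately show ?thesis by (simp only: ereal_divide ne if_False ereal_less_eq(5))
  qed
  also have "\<dots> \<le> (SUP a\<in>{r..}. ereal (measure \<nu> (space \<nu> - cball x0 a)) / ereal (min (\<alpha> a) 1))"
    by (intro SUP_upper) auto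
  finally show ?thesis unfolding beta_tilde_def using assms by (intro ediv_nonneg) auto
qed
lemma mi: "0 \<le> (x::ereal) \<Longrightarrow> -\<infinity> - x = -\<infinity>" by (cases x) auto

theorem lemma4p5:
  fixes x0 :: "'a::polish_space"
    and \<mu> \<nu> :: "'a measure"
    and m1 m2 r :: real
    and K :: "'a \<Rightarrow> 'a \<Rightarrow> real"
    and l \<alpha>1 \<alpha>1' \<alpha>2 \<alpha>2' :: "real \<Rightarrow> real"
    and f g :: "'a \<Rightarrow> real"
  assumes "prob_space \<mu>" "sets \<mu> = sets borel"
    and "prob_space \<nu>" "sets \<nu> = sets borel"
    and "0 < m1" "m1 \<le> m2"
    and "(\<lambda>(x, y). K x y) \<in> borel_measurable (borel \<Otimes>\<^sub>M borel)"
    and "\<forall>x y. 0 < K x y \<and> K x y \<le> 1"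
    and "lower_decay x0 K l"
    and "tail_function \<alpha>1" "tail_function \<alpha>1'"
    and "tail_function \<alpha>2" "tail_function \<alpha>2'"
    and "measure \<mu> (cball x0 m1) > 0" "measure \<nu> (cball x0 m1) > 0"
    and "\<forall>s>0. \<alpha>1 s > 0" "\<forall>s>0. \<alpha>2 s > 0"
    and "r \<ge> m2"
    and "\<alpha>1' m2 \<le> 0.5"
    and "beta_tilde x0 m1 \<nu> \<alpha>2 m1 \<le> 0.5"
    and "l r \<le> 1"
    and "f \<in> Fnorm x0 m1 m2 \<mu> \<alpha>1 \<alpha>1'"
    and "g \<in> Gnorm x0 m1 m2 \<nu> \<alpha>2 \<alpha>2'"
  shows "ereal (\<integral>x. Lop K \<nu> g x * f x \<partial>\<mu>) \<ge>
           ereal (l r) - ereal (\<alpha>1' m2) - 4 * beta_tilde x0 m1 \<nu> \<alpha>2 m1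
           - 4 * ereal (\<alpha>1 r) - 4 * ereal (\<alpha>1' r)
           - 5 * beta x0 m1 \<nu> \<alpha>2' r - 5 * beta_tilde x0 m1 \<nu> \<alpha>2 r"
proof -
  interpret M: prob_space \<mu> by fact
  interpret N: prob_space \<nu> by fact
  note PM = assms(1) and PN = assms(3) and sbM = assms(2) and sbN = assms(4)
  have spM: "space \<mu> = UNIV" using sets_eq_imp_space_eq[OF sbM] by simp
  have spN: "space \<nu> = UNIV" using sets_eq_imp_space_eq[OF sbN] by simp
  have cb[measurable]: "cball x0 s \<in> sets borel" for s by (simp add: borel_closed)
  have r0: "0 < r" "m1 \<le> r" using assms(5,6,18) by auto
  have fF: "f \<in> Fcls x0 m1 m2 \<mu> \<alpha>1 \<alpha>1'" and f1: "(\<integral>x. f x \<partial>\<mu>) = 1"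
    using assms(22) unfolding Fnorm_def by auto
  have fL2: "f \<in> L2 \<mu>" and fAE: "AE x in \<mu>. x \<in> cball x0 m2 \<longrightarrow> f x \<ge> 0"
    and ft1: "\<And>s. s \<ge> m1 \<Longrightarrow> (\<integral>x\<in>space \<mu> - cball x0 s. max (f x) 0 \<partial>\<mu>) \<le> \<alpha>1 s * (\<integral>x. f x \<partial>\<mu>)"
    and ft2: "\<And>s. s \<ge> m2 \<Longrightarrow> (\<integral>x\<in>space \<mu> - cball x0 s. max (- f x) 0 \<partial>\<mu>) \<le> \<alpha>1' s * (\<integral>x. f x \<partial>\<mu>)"
    using fF unfolding Fcls_def by auto
  have fm[measurable]: "f \<in> borel_measurable borel" using fL2 sbM measurable_cong_sets unfolding L2_def by blast
  have fi: "integrable \<mu> f" using L2_int[OF PM fL2] .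
  have gG: "g \<in> Gcls x0 m1 m2 \<nu> \<alpha>2 \<alpha>2'" and g1: "(\<integral>x. g x \<partial>\<nu>) = 1"
    using assms(23) unfolding Gnorm_def by auto
  have gL2: "g \<in> L2 \<nu>" using gG unfolding Gcls_def by auto
  have gm[measurable]: "g \<in> borel_measurable borel" using gL2 sbN measurable_cong_sets unfolding L2_def by blast
  have gi: "integrable \<nu> g" using L2_int[OF PN gL2] .
  have lK: "\<forall>x\<in>cball x0 r. \<forall>y\<in>cball x0 r. l r \<le> K x y" and l0: "0 \<le> l r"
    using assms(9) r0 unfolding lower_decay_def by auto
  have a1r: "0 \<le> \<alpha>1 r" using assms(10) r0 unfolding tail_function_def by auto
  have a1'r: "0 \<le> \<alpha>1' r" using assms(11) r0 unfolding tail_function_def by auto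
  have a2'nn: "\<forall>s>0. 0 \<le> \<alpha>2' s" using assms(13) unfolding tail_function_def by auto
  define G0 where "G0 = (\<integral>y. indicator (cball x0 m1) y * g y \<partial>\<nu>)"
  define Ng where "Ng = (\<integral>y. max (- g y) 0 \<partial>\<nu>)"
  define Pg where "Pg = (\<integral>y. indicator (cball x0 r) y * max (g y) 0 \<partial>\<nu>)"
  define T where "T = (\<integral>y. indicator (- cball x0 r) y * max (g y) 0 \<partial>\<nu>)"
  define Nf where "Nf = (\<integral>x. max (- f x) 0 \<partial>\<mu>)"
  define Pf where "Pf = (\<integral>x. indicator (cball x0 r) x * max (f x) 0 \<partial>\<mu>)"
  obtain b' where bte: "beta_tilde x0 m1 \<nu> \<alpha>2 m1 = ereal b'" and b'0: "0 \<le> b'" and b'h: "b' \<le> 1/2"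
    and NgG: "Ng \<le> b' * G0"
    using negpart[OF PN sbN assms(5,6,13,17,15,20) gG] unfolding Ng_def G0_def by blast
  have gpi: "integrable \<nu> (\<lambda>y. max (g y) 0)" and gni: "integrable \<nu> (\<lambda>y. max (- g y) 0)" using gi by auto
  have fpi: "integrable \<mu> (\<lambda>y. max (f y) 0)" and fni: "integrable \<mu> (\<lambda>y. max (- f y) 0)" using fi by auto
  have indi: "integrable M (\<lambda>x. indicator A x * h x)" if "integrable M h" "sets M = sets borel" "A \<in> sets borel"
    for M A and h :: "'a \<Rightarrow> real"
    using integrable_mult_indicator[of A M h] that by simp
  have fdiff: "(\<integral>x. max (f x) 0 \<partial>\<mu>) - Nf = 1"
  proof -
    have "(\<integral>x. max (f x) 0 \<partial>\<mu>) - Nf = (\<integral>x. max (f x) 0 - max (- f x) 0 \<partial>\<mu>)"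
      unfolding Nf_def using fpi fni by simp
    also have "\<dots> = (\<integral>x. f x \<partial>\<mu>)" by (intro Bochner_Integration.integral_cong) auto
    finally show ?thesis using f1 by simp
  qed
  have Ng0: "0 \<le> Ng" unfolding Ng_def by simp
  have Nf0: "0 \<le> Nf" unfolding Nf_def by simp
  have Pg0: "0 \<le> Pg" unfolding Pg_def by simp
  have Pf0: "0 \<le> Pf" unfolding Pf_def by simp
  have T0: "0 \<le> T" unfolding T_def by simp
  have G0le: "G0 \<le> 2"
  proof -
    have i1: "integrable \<nu> (\<lambda>y. indicator (cball x0 m1) y * g y)" by (rule indi[OF gi sbN]) simp
    have i2: "integrable \<nu> (\<lambda>y. indicator (- cball x0 m1) y * g y)" by (rule indi[OF gi sbN]) simp
    have "1 = (\<integral>y. indicator (cball x0 m1) y * g y + indicator (- cball x0 m1) y * g y \<partial>\<nu>)"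
    proof -
      have "(\<integral>y. indicator (cball x0 m1) y * g y + indicator (- cball x0 m1) y * g y \<partial>\<nu>) = (\<integral>y. g y \<partial>\<nu>)"
        by (intro Bochner_Integration.integral_cong) (auto split: split_indicator)
      then show ?thesis using g1 by simp
    qed
    also have "\<dots> = G0 + (\<integral>y. indicator (- cball x0 m1) y * g y \<partial>\<nu>)"
      unfolding G0_def using i1 i2 by simp
    finally have e1: "1 = G0 + (\<integral>y. indicator (- cball x0 m1) y * g y \<partial>\<nu>)" .
    have "- Ng \<le> (\<integral>y. indicator (- cball x0 m1) y * g y \<partial>\<nu>)"
    proof -
      have "(\<integral>y. - max (- g y) 0 \<partial>\<nu>) \<le> (\<integral>y. indicator (- cball x0 m1) y * g y \<partial>\<nu>)"
        using gni i2 by (intro integral_mono) (auto split: split_indicator)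
      then show ?thesis unfolding Ng_def by simp
    qed
    then have "G0 * (1 - b') \<le> 1" using e1 NgG by (simp add: algebra_simps)
    show ?thesis
    proof (cases "G0 \<le> 0")
      case False
      have "G0 * (1/2) \<le> G0 * (1 - b')" using False b'h by (intro mult_left_mono) auto
      then show ?thesis using \<open>G0 * (1 - b') \<le> 1\<close> by linarith
    qed simp
  qed
  have Ng2: "Ng \<le> 2 * b'"
  proof -
    have "b' * G0 \<le> b' * 2" using b'0 G0le by (intro mult_left_mono) auto
    then show ?thesis using NgG by simp
  qed
  have Nfle: "Nf \<le> \<alpha>1' m2"
  proof -
    have "Nf = (\<integral>x. indicator (space \<mu> - cball x0 m2) x *\<^sub>R max (- f x) 0 \<partial>\<mu>)"
      unfolding Nf_def
    proof (rule integral_cong_AE)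
      show "(\<lambda>x. max (- f x) 0) \<in> borel_measurable \<mu>" by (rule meas_cong[OF sbM]) measurable
      show "(\<lambda>x. indicator (space \<mu> - cball x0 m2) x *\<^sub>R max (- f x) 0) \<in> borel_measurable \<mu>"
        unfolding spM by (rule meas_cong[OF sbM]) measurable
      show "AE x in \<mu>. max (- f x) 0 = indicator (space \<mu> - cball x0 m2) x *\<^sub>R max (- f x) 0"
        using fAE by eventually_elim (auto simp: spM split: split_indicator)
    qed
    also have "\<dots> \<le> \<alpha>1' m2" using ft2[of m2] f1 unfolding set_lebesgue_integral_def by simp
    finally show ?thesis .
  qed
  have Pfge: "1 - \<alpha>1 r \<le> Pf"
  proof -
    have "(\<integral>x. max (f x) 0 \<partial>\<mu>) - Nf = 1"
      using fdiff .
    moreover have "(\<integral>x. max (f x) 0 \<partial>\<mu>) = Pf + (\<integral>x\<in>space \<mu> - cball x0 r. max (f x) 0 \<partial>\<mu>)"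
    proof -
      have i1: "integrable \<mu> (\<lambda>y. indicator (cball x0 r) y * max (f y) 0)" by (rule indi[OF fpi sbM]) simp
      have i2: "integrable \<mu> (\<lambda>y. indicator (- cball x0 r) y * max (f y) 0)" by (rule indi[OF fpi sbM]) simp
      have "(\<integral>x. max (f x) 0 \<partial>\<mu>) = (\<integral>y. indicator (cball x0 r) y * max (f y) 0 + indicator (- cball x0 r) y * max (f y) 0 \<partial>\<mu>)"
        by (intro Bochner_Integration.integral_cong) (auto split: split_indicator)
      also have "\<dots> = Pf + (\<integral>y. indicator (- cball x0 r) y * max (f y) 0 \<partial>\<mu>)"
        unfolding Pf_def using i1 i2 by simp
      moreover have "space \<mu> - cball x0 r = - cball x0 r" using spM by auto
      ultimately show ?thesis unfolding set_lebesgue_integral_def by simp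
    qed
    moreover have "(\<integral>x\<in>space \<mu> - cball x0 r. max (f x) 0 \<partial>\<mu>) \<le> \<alpha>1 r" using ft1[OF r0(2)] f1 by simp
    ultimately show ?thesis using Nf0 by linarith
  qed
  have Pgge: "1 - T \<le> Pg"
  proof -
    have i1: "integrable \<nu> (\<lambda>y. indicator (cball x0 r) y * max (g y) 0)" by (rule indi[OF gpi sbN]) simp
    have i2: "integrable \<nu> (\<lambda>y. indicator (- cball x0 r) y * max (g y) 0)" by (rule indi[OF gpi sbN]) simp
    have "1 \<le> (\<integral>y. indicator (cball x0 r) y * max (g y) 0 + indicator (- cball x0 r) y * max (g y) 0 \<partial>\<nu>)"
      unfolding g1[symmetric] using gi i1 i2 by (intro integral_mono) (auto split: split_indicator)
    also have "\<dots> = Pg + T" unfolding Pg_def T_def using i1 i2 by simp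
    finally show ?thesis by simp
  qed
  have LB: "l r * indicator (cball x0 r) x * Pg - Ng \<le> Lop K \<nu> g x" for x
    using Lbounds(1)[OF PN sbN assms(7,8) gi gm lK g1] unfolding Pg_def Ng_def by simp
  have UB: "Lop K \<nu> g x \<le> 1 + Ng" for x
    using Lbounds(2)[OF PN sbN assms(7,8) gi gm lK g1] unfolding Ng_def by simp
  have Kswap: "(\<lambda>p. K (snd p) (fst p)) \<in> borel_measurable (borel \<Otimes>\<^sub>M borel)"
    using measurable_compose[OF measurable_pair_swap' assms(7)] by (simp add: case_prod_beta')
  have Lm: "(\<lambda>x. Lop K \<nu> g x) \<in> borel_measurable \<mu>"
    unfolding Lop_def
  proof (rule N.borel_measurable_lebesgue_integral)
    have "(\<lambda>p. K (snd p) (fst p) * g (snd p)) \<in> borel_measurable (borel \<Otimes>\<^sub>M borel)"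
      using Kswap measurable_compose[OF measurable_snd gm] by (rule borel_measurable_times)
    then have "(\<lambda>p. K (snd p) (fst p) * g (snd p)) \<in> borel_measurable (\<mu> \<Otimes>\<^sub>M \<nu>)"
      using measurable_cong_sets[OF sets_pair_measure_cong[OF sbM sbN] refl] by blast
    then show "(\<lambda>(x, y). K y x * g y) \<in> borel_measurable (\<mu> \<Otimes>\<^sub>M \<nu>)" by (simp add: case_prod_beta')
  qed
  have Labs: "\<bar>Lop K \<nu> g x\<bar> \<le> 1 + Ng" for x
  proof -
    have "0 \<le> l r * indicator (cball x0 r) x * Pg" using l0 Pg0 by simp
    then show ?thesis using LB[of x] UB[of x] Ng0 by linarith
  qed
  have LFi: "integrable \<mu> (\<lambda>x. Lop K \<nu> g x * f x)"
  proof (rule Bochner_Integration.integrable_bound)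
    show "integrable \<mu> (\<lambda>x. (1 + Ng) * f x)" using fi by simp
    show "(\<lambda>x. Lop K \<nu> g x * f x) \<in> borel_measurable \<mu>" using Lm fi by measurable
    show "AE x in \<mu>. norm (Lop K \<nu> g x * f x) \<le> norm ((1 + Ng) * f x)"
    proof (rule AE_I2)
      fix x
      have "\<bar>Lop K \<nu> g x\<bar> * \<bar>f x\<bar> \<le> (1 + Ng) * \<bar>f x\<bar>" using Labs[of x] by (intro mult_right_mono) auto
      then show "norm (Lop K \<nu> g x * f x) \<le> norm ((1 + Ng) * f x)" using Ng0 by (simp add: abs_mult)
    qed
  qed
  have fpci: "integrable \<mu> (\<lambda>y. indicator (cball x0 r) y * max (f y) 0)" by (rule indi[OF fpi sbM]) simp
  have Imain: "l r * Pg * Pf - Ng * (1 + Nf) - (1 + Ng) * Nf \<le> (\<integral>x. Lop K \<nu> g x * f x \<partial>\<mu>)"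
  proof -
    have fpint: "(\<integral>x. max (f x) 0 \<partial>\<mu>) = 1 + Nf"
    proof -
      have "(\<integral>x. max (f x) 0 \<partial>\<mu>) - Nf = 1"
        using fdiff .
      then show ?thesis by simp
    qed
    have "(\<integral>x. (l r * Pg) * (indicator (cball x0 r) x * max (f x) 0) - Ng * max (f x) 0 - (1 + Ng) * max (- f x) 0 \<partial>\<mu>)
        = l r * Pg * Pf - Ng * (1 + Nf) - (1 + Ng) * Nf"
      using fpci fpi fni fpint unfolding Pf_def Nf_def by simp
    moreover have "(\<integral>x. (l r * Pg) * (indicator (cball x0 r) x * max (f x) 0) - Ng * max (f x) 0 - (1 + Ng) * max (- f x) 0 \<partial>\<mu>)
        \<le> (\<integral>x. Lop K \<nu> g x * f x \<partial>\<mu>)"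
    proof (rule integral_mono[OF _ LFi])
      show "integrable \<mu> (\<lambda>x. (l r * Pg) * (indicator (cball x0 r) x * max (f x) 0) - Ng * max (f x) 0 - (1 + Ng) * max (- f x) 0)"
        using fpci fpi fni by simp
      fix x
      show "(l r * Pg) * (indicator (cball x0 r) x * max (f x) 0) - Ng * max (f x) 0 - (1 + Ng) * max (- f x) 0 \<le> Lop K \<nu> g x * f x"
      proof (cases "f x \<ge> 0")
        case True
        have "(l r * indicator (cball x0 r) x * Pg - Ng) * f x \<le> Lop K \<nu> g x * f x"
          using LB[of x] True by (intro mult_right_mono) auto
        then show ?thesis using True by (simp add: algebra_simps)
      next
        case False
        have "(1 + Ng) * f x \<le> Lop K \<nu> g x * f x"
          using UB[of x] False by (intro mult_right_mono_neg) auto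
        then show ?thesis using False by (simp add: algebra_simps)
      qed
    qed
    ultimately show ?thesis by simp
  qed
  have rm: "l r - \<alpha>1 r - T \<le> l r * Pg * Pf"
    using real_main[OF l0 assms(21) Pg0 Pf0 Pfge Pgge a1r T0] .
  have err: "Ng * (1 + Nf) + (1 + Ng) * Nf \<le> 4 * b' + \<alpha>1' m2"
  proof -
    have Nfh: "Nf \<le> 1/2" using Nfle assms(19) by simp
    have "Ng * Nf \<le> Ng * (1/2)" using Ng0 Nfh by (intro mult_left_mono) auto
    then show ?thesis using Ng2 Nfle by (simp add: algebra_simps)
  qed
  have Ireal: "l r - \<alpha>1' m2 - 4 * b' - \<alpha>1 r - T \<le> (\<integral>x. Lop K \<nu> g x * f x \<partial>\<mu>)"
    using Imain rm err by linarith
  have bt_r0: "0 \<le> beta_tilde x0 m1 \<nu> \<alpha>2 r" using beta_tilde_nonneg[OF r0(1) assms(15,17)] .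
  have b_r0: "0 \<le> beta x0 m1 \<nu> \<alpha>2' r" using beta_nonneg[OF r0(1) assms(15) a2'nn] .
  show ?thesis
  proof (cases "beta x0 m1 \<nu> \<alpha>2' r")
    case (real c)
    have cT: "0 \<le> c \<and> T \<le> c * G0"
      using pospart[OF PN sbN assms(5,6,18,13,17,15) real gG] unfolding T_def G0_def .
    have "c * G0 \<le> c * 2" using cT G0le by (intro mult_left_mono) auto
    then have T2: "T \<le> 2 * c" using cT by simp
    show ?thesis
    proof (cases "beta_tilde x0 m1 \<nu> \<alpha>2 r")
      case (real d)
      have d0: "0 \<le> d" using bt_r0 real by simp
      have "l r - \<alpha>1' m2 - 4 * b' - 4 * \<alpha>1 r - 4 * \<alpha>1' r - 5 * c - 5 * d \<le> (\<integral>x. Lop K \<nu> g x * f x \<partial>\<mu>)"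
        using Ireal T2 a1r a1'r d0 cT by linarith
      then show ?thesis using bte \<open>beta x0 m1 \<nu> \<alpha>2' r = ereal c\<close> real by simp
    next
      case PInf
      then show ?thesis using bte \<open>beta x0 m1 \<nu> \<alpha>2' r = ereal c\<close> by simp
    next
      case MInf
      then show ?thesis using bt_r0 by simp
    qed
  next
    case PInf
    have "0 \<le> 5 * beta_tilde x0 m1 \<nu> \<alpha>2 r" using bt_r0 by simp
    then show ?thesis using bte PInf by (simp add: mi)
  next
    case MInf
    then show ?thesis using b_r0 by simp
  qed
qed
end
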